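(* Let $f\in C^1(\mathbb{R}^n,\mathbb{R}^n)$ and let $x_0$ be a nondegenerate $T$-periodic limit cycle of $\dot x=f(x)$, $T>0$. Assume that the adjoint system $\dot z=-(f'(x_0(t)))^*z$ has $n$ linearly independent eigenfunctions, namely $z_1,\dots,z_{n-1}$, which are not $T$-periodic, and a $T$-periodic eigenfunction $z_0$ normalized so that $\langle\dot x_0(0),z_0(0)\rangle=1$. Then for every $t\in\mathbb{R}$ the last column of the matrix $\big((z_1(t),\dots,z_{n-1}(t),z_0(t))^{-1}\big)^*$ equals $\dot x_0(t)$.
   Context: Nondegenerate: the characteristic multiplier $+1$ of the linearized system $\dot y=f'(x_0(t))y$ (eigenvalue $1$ of $Y(T)$, $Y$ the fundamental matrix with $Y(0)=I$) has algebraic multiplicity $1$. An eigenfunction of a linear $T$-periodic system is a nonzero solution $z$ with $z(t+T)=\rho z(t)$ for all $t\in\mathbb{R}$ and some $\rho\in\mathbb{R}$. $^*$ denotes transpose; $(z_1(t),\dots,z_{n-1}(t),z_0(t))$ is the $n\times n$ matrix with these columns. *)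

theory Defs
  imports "HOL-Analysis.Analysis" "HOL-Computational_Algebra.Polynomial"
begin

definition charpoly :: "real^'n^'n \<Rightarrow> real poly" where
  "charpoly A = det (\<chi> i j. (if i = j then monom 1 1 else 0) - [:A $ i $ j:])"

definition alg_mult :: "real^'n^'n \<Rightarrow> real \<Rightarrow> nat" where
  "alg_mult A lambda = order lambda (charpoly A)"

definition is_solution :: "(real^'n \<Rightarrow> real^'n) \<Rightarrow> (real \<Rightarrow> real^'n) \<Rightarrow> bool" where
  "is_solution f x \<longleftrightarrow> (\<forall>t. (x has_vector_derivative f (x t)) (at t))"

definition periodic_limit_cycle ::
  "(real^'n \<Rightarrow> real^'n) \<Rightarrow> (real \<Rightarrow> real^'n) \<Rightarrow> real \<Rightarrow> bool" where
  "periodic_limit_cycle f x0 T \<longleftrightarrow>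
     T > 0 \<and> is_solution f x0 \<and> (\<forall>t. x0 (t + T) = x0 t) \<and>
     (\<exists>s t. x0 s \<noteq> x0 t) \<and>
     (\<exists>e>0. \<forall>y S. S > 0 \<and> is_solution f y \<and> (\<forall>t. y (t + S) = y t) \<and>
              (\<forall>t. infdist (y t) (range x0) < e) \<longrightarrow> range y = range x0)"

definition fundamental_matrix :: "(real \<Rightarrow> real^'n^'n) \<Rightarrow> (real \<Rightarrow> real^'n^'n) \<Rightarrow> bool" where
  "fundamental_matrix A Y \<longleftrightarrow> Y 0 = mat 1 \<and>
     (\<forall>t. (Y has_vector_derivative (A t ** Y t)) (at t))"

definition nondegenerate ::
  "(real^'n \<Rightarrow> real^'n^'n) \<Rightarrow> (real \<Rightarrow> real^'n) \<Rightarrow> real \<Rightarrow> bool" where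
  "nondegenerate f' x0 T \<longleftrightarrow>
     (\<forall>Y. fundamental_matrix (\<lambda>t. f' (x0 t)) Y \<longrightarrow> alg_mult (Y T) 1 = 1)"

definition eigenfunction ::
  "(real \<Rightarrow> real^'n^'n) \<Rightarrow> real \<Rightarrow> (real \<Rightarrow> real^'n) \<Rightarrow> bool" where
  "eigenfunction B T z \<longleftrightarrow>
     (\<forall>t. (z has_vector_derivative (B t *v z t)) (at t)) \<and> (\<exists>t. z t \<noteq> 0) \<and>
     (\<exists>rho::real. \<forall>t. z (t + T) = rho *\<^sub>R z t)"

end

theory Submission imports Defs begin
lemma bil: "((\<lambda>x. f x \<bullet> g x) has_vector_derivative (f x \<bullet> g' + f' \<bullet> g x)) (at x)"
 if "(f has_vector_derivative f') (at x)" "(g has_vector_derivative g') (at x)" for f g :: "real \<Rightarrow> real^'n"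
  using bounded_bilinear.has_vector_derivative[OF bounded_bilinear_inner that] by simp

lemma neg_mv: "(- M) *v (z::real^'n) = - (M *v z)"
  by (simp add: vec_eq_iff matrix_vector_mult_def sum_negf)

lemma adj: "(y::real^'n) \<bullet> ((- transpose A) *v z) + (A *v y) \<bullet> z = 0"
  by (simp add: neg_mv dot_lmul_matrix[symmetric] inner_commute)

lemma dot_const:
  fixes y z :: "real \<Rightarrow> real^'n"
  assumes y: "\<And>t. (y has_vector_derivative A t *v y t) (at t)"
      and z: "\<And>t. (z has_vector_derivative (- transpose (A t)) *v z t) (at t)"
  shows "y t \<bullet> z t = y s \<bullet> z s"
proof -
  have "\<And>t. DERIV (\<lambda>t. y t \<bullet> z t) t :> 0"
  proof -
    fix t
    have "(y t \<bullet> ((- transpose (A t)) *v z t) + (A t *v y t) \<bullet> z t) = 0" by (rule adj)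
    then show "DERIV (\<lambda>t. y t \<bullet> z t) t :> 0"
      using bil[OF y z, of t] by (simp add: has_real_derivative_iff_has_vector_derivative)
  qed
  then show ?thesis using DERIV_isconst_all[of "\<lambda>t. y t \<bullet> z t" t s] by blast
qed

lemma uniq:
  fixes u :: "real \<Rightarrow> real^'n" and B :: "real \<Rightarrow> real^'n^'n"
  assumes Bc: "continuous_on UNIV B"
    and u: "\<And>t. (u has_vector_derivative B t *v u t) (at t)"
    and u0: "u t0 = 0"
  shows "u t = 0"
proof -
  define S where "S = {min t t0 .. max t t0}"
  define K where "K = (\<lambda>s. \<Sum>i\<in>UNIV. \<Sum>j\<in>UNIV. \<bar>B s $ i $ j\<bar>)"
  have Bc': "continuous_on S B" using continuous_on_subset[OF Bc] by blast
  have "continuous_on S (\<lambda>s. B s $ i $ j)" for i j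
    using continuous_on_component[OF continuous_on_component[OF Bc']] .
  then have Kc: "continuous_on S K" unfolding K_def
    by (intro continuous_on_sum continuous_on_rabs) auto
  have "compact (K ` S)" unfolding S_def using Kc S_def compact_continuous_image by blast
  then obtain Kb where Kb: "\<And>s. s \<in> S \<Longrightarrow> \<bar>K s\<bar> \<le> Kb"
    using compact_imp_bounded[of "K ` S"] unfolding bounded_iff by (auto simp: real_norm_def)
  have Kb0: "0 \<le> Kb" using Kb[of t] by (auto simp: S_def)
  have nb: "norm (B s *v x) \<le> Kb * norm x" if "s \<in> S" for s x
  proof -
    have "norm (B s *v x) \<le> onorm ((*v) (B s)) * norm x"
      by (rule onorm) simp
    also have "\<dots> \<le> Kb * norm x"
      using onorm_le_matrix_component_sum[of "B s"] Kb[OF that] unfolding K_def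
      by (intro mult_right_mono) auto
    finally show ?thesis .
  qed
  define g where "g = (\<lambda>s. u s \<bullet> u s)"
  define g' where "g' = (\<lambda>s. 2 * (u s \<bullet> (B s *v u s)))"
  have gd: "DERIV g s :> g' s" for s
    using bil[OF u u, of s] unfolding g_def g'_def
    by (simp add: has_real_derivative_iff_has_vector_derivative inner_commute)
  have gb: "\<bar>g' s\<bar> \<le> 2 * Kb * g s" if "s \<in> S" for s
  proof -
    have "\<bar>u s \<bullet> (B s *v u s)\<bar> \<le> norm (u s) * norm (B s *v u s)"
      by (rule Cauchy_Schwarz_ineq2)
    also have "\<dots> \<le> norm (u s) * (Kb * norm (u s))"
      using nb[OF that] by (simp add: mult_left_mono)
    finally show ?thesis unfolding g'_def g_def
      by (simp add: abs_mult power2_eq_square dot_square_norm mult.commute mult.left_commute)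
  qed
  have g0: "g s \<ge> 0" for s unfolding g_def by simp
  show ?thesis
  proof (cases "t0 \<le> t")
    case True
    define h where "h = (\<lambda>s. g s * exp (- (2*Kb) * s))"
    have "h t \<le> h t0"
    proof (rule DERIV_nonpos_imp_nonincreasing[OF True])
      fix x assume x: "t0 \<le> x" "x \<le> t"
      have "DERIV h x :> g' x * exp (- (2*Kb) * x) + exp (- (2*Kb) * x) * (- (2*Kb)) * g x"
        unfolding h_def by (rule DERIV_mult[OF gd DERIV_fun_exp[OF DERIV_cmult_Id]])
      moreover have "g' x * exp (- (2*Kb) * x) + exp (- (2*Kb) * x) * (- (2*Kb)) * g x \<le> 0"
      proof -
        have "g' x \<le> 2 * Kb * g x" using gb[of x] x True by (auto simp: S_def)
        then have "exp (- (2*Kb) * x) * (g' x - 2 * Kb * g x) \<le> 0"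
          by (simp add: mult_nonneg_nonpos)
        then show ?thesis by (simp add: algebra_simps)
      qed
      ultimately show "\<exists>y. DERIV h x :> y \<and> y \<le> 0" by blast
    qed
    then have "g t \<le> 0" using u0 g0[of t] unfolding h_def g_def
      by (simp add: mult_le_0_iff)
    then show ?thesis using g0[of t] unfolding g_def by simp
  next
    case False
    then have F: "t \<le> t0" by simp
    define h where "h = (\<lambda>s. g s * exp ((2*Kb) * s))"
    have "h t \<le> h t0"
    proof (rule DERIV_nonneg_imp_nondecreasing[OF F])
      fix x assume x: "t \<le> x" "x \<le> t0"
      have "DERIV h x :> g' x * exp ((2*Kb) * x) + exp ((2*Kb) * x) * (2*Kb) * g x"
        unfolding h_def by (rule DERIV_mult[OF gd DERIV_fun_exp[OF DERIV_cmult_Id]])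
      moreover have "g' x * exp ((2*Kb) * x) + exp ((2*Kb) * x) * (2*Kb) * g x \<ge> 0"
      proof -
        have "- g' x \<le> 2 * Kb * g x" using gb[of x] x F by (auto simp: S_def)
        then have "exp ((2*Kb) * x) * (g' x + 2 * Kb * g x) \<ge> 0"
          by simp
        then show ?thesis by (simp add: algebra_simps)
      qed
      ultimately show "\<exists>y. DERIV h x :> y \<and> y \<ge> 0" by blast
    qed
    then have "g t \<le> 0" using u0 g0[of t] unfolding h_def g_def
      by (simp add: mult_le_0_iff)
    then show ?thesis using g0[of t] unfolding g_def by simp
  qed
qed

lemma lemma3:
  fixes f :: "real^'n \<Rightarrow> real^'n"
    and f' :: "real^'n \<Rightarrow> real^'n^'n"
    and x0 :: "real \<Rightarrow> real^'n"
    and T :: real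
    and z :: "'n \<Rightarrow> real \<Rightarrow> real^'n"
    and i0 :: 'n
  assumes f_deriv: "\<And>x. (f has_derivative (\<lambda>h. f' x *v h)) (at x)"
    and f'_cont: "continuous_on UNIV f'"
    and cycle: "periodic_limit_cycle f x0 T"
    and nondeg: "nondegenerate f' x0 T"
    and eig: "\<And>i. eigenfunction (\<lambda>t. - transpose (f' (x0 t))) T (z i)"
    and indep: "\<And>c. (\<forall>t. (\<Sum>i\<in>UNIV. c i *\<^sub>R z i t) = 0) \<Longrightarrow> (\<forall>i. c i = 0)"
    and not_periodic: "\<And>i. i \<noteq> i0 \<Longrightarrow> \<not> (\<forall>t. z i (t + T) = z i t)"
    and periodic0: "\<And>t. z i0 (t + T) = z i0 t"
    and normalized: "vector_derivative x0 (at 0) \<bullet> z i0 0 = 1"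
  shows "\<forall>t. column i0 (transpose (matrix_inv (\<chi> i j. z j t $ i)))
               = vector_derivative x0 (at t)"
proof
  fix t
  define A where "A = (\<lambda>t. f' (x0 t))"
  define v where "v = (\<lambda>t. vector_derivative x0 (at t))"
  have x0d: "\<And>t. (x0 has_vector_derivative f (x0 t)) (at t)"
    and x0p: "\<And>t. x0 (t + T) = x0 t"
    using cycle unfolding periodic_limit_cycle_def is_solution_def by auto
  have vf: "v s = f (x0 s)" for s
    unfolding v_def using x0d vector_derivative_at by blast
  have vfun: "v = f \<circ> x0" using vf by auto
  have vd: "(v has_vector_derivative A s *v v s) (at s)" for s
  proof -
    have "((f \<circ> x0) has_derivative ((\<lambda>h. f' (x0 s) *v h) \<circ> (\<lambda>h. h *\<^sub>R f (x0 s)))) (at s)"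
      using diff_chain_at[OF x0d[of s, unfolded has_vector_derivative_def] f_deriv] .
    then show ?thesis unfolding has_vector_derivative_def vfun A_def
      by (simp add: o_def vf matrix_vector_mult_scaleR)
  qed
  have zd: "\<And>j s. (z j has_vector_derivative (- transpose (A s)) *v z j s) (at s)"
    using eig unfolding eigenfunction_def A_def by blast
  have dc: "v s \<bullet> z j s = v 0 \<bullet> z j 0" for s j
    by (rule dot_const[OF vd zd])
  have vT: "v T = v 0" using x0p[of 0] vf by simp
  have dj: "v s \<bullet> z j s = (if j = i0 then 1 else 0)" for s j
  proof (cases "j = i0")
    case True
    then show ?thesis using dc[of s i0] normalized unfolding v_def by simp
  next
    case False
    obtain rho where rho: "\<And>t. z j (t + T) = rho *\<^sub>R z j t"
      using eig[of j] unfolding eigenfunction_def by blast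
    have "v 0 \<bullet> z j 0 = v T \<bullet> z j T" using dc[of T j] by simp
    also have "\<dots> = rho * (v 0 \<bullet> z j 0)" using rho[of 0] vT by simp
    finally have "(1 - rho) * (v 0 \<bullet> z j 0) = 0" by (simp add: algebra_simps)
    moreover have "rho \<noteq> 1" using rho not_periodic[OF False] by auto
    ultimately show ?thesis using dc[of s j] False by simp
  qed
  have Bc: "continuous_on UNIV (\<lambda>s. - transpose (A s))"
  proof -
    have x0c: "continuous_on UNIV x0"
      using x0d by (meson continuous_at_imp_continuous_on has_vector_derivative_continuous)
    have Ac: "continuous_on UNIV A" unfolding A_def
      using continuous_on_compose[OF x0c continuous_on_subset[OF f'_cont], unfolded o_def] by simp
    have eq: "(\<lambda>s. - transpose (A s)) = (\<lambda>s. \<chi> i j. - (A s $ j $ i))"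
      by (auto simp: vec_eq_iff transpose_def)
    show ?thesis unfolding eq
      by (intro continuous_on_vec_lambda continuous_on_minus continuous_on_component Ac)
  qed
  define M where "M = (\<chi> i j. z j t $ i)"
  have Mv: "M *v c = (\<Sum>j\<in>UNIV. c $ j *\<^sub>R z j t)" for c
    by (simp add: M_def vec_eq_iff matrix_vector_mult_def mult.commute)
  have inv: "invertible M"
    unfolding invertible_left_inverse matrix_left_invertible_ker
  proof (intro allI impI)
    fix c assume c: "M *v c = 0"
    define u where "u = (\<lambda>s. \<Sum>j\<in>UNIV. c $ j *\<^sub>R z j s)"
    have ud: "(u has_vector_derivative (- transpose (A s)) *v u s) (at s)" for s
    proof -
      have "(u has_vector_derivative (\<Sum>j\<in>UNIV. c $ j *\<^sub>R ((- transpose (A s)) *v z j s))) (at s)"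
        unfolding u_def by (intro has_vector_derivative_sum bounded_linear.has_vector_derivative[OF bounded_linear_scaleR_right] zd)
      moreover have "(\<Sum>j\<in>UNIV. c $ j *\<^sub>R ((- transpose (A s)) *v z j s)) = (- transpose (A s)) *v u s"
        unfolding u_def by (simp add: linear_sum[OF matrix_vector_mul_linear] matrix_vector_mult_scaleR)
      ultimately show ?thesis by simp
    qed
    have "u s = 0" for s
      by (rule uniq[OF Bc ud]) (use c Mv u_def in auto)
    then have "\<forall>j. c $ j = 0" using indep[of "\<lambda>j. c $ j"] unfolding u_def by blast
    then show "c = 0" by (simp add: vec_eq_iff)
  qed
  define N where "N = matrix_inv M"
  have MN: "M ** N = mat 1 \<and> N ** M = mat 1"
    using inv unfolding invertible_def N_def matrix_inv_def by (rule someI_ex)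
  have Mt: "transpose M *v v t = axis i0 1"
    using dj[of t] by (simp add: vec_eq_iff M_def transpose_def matrix_vector_mult_def axis_def inner_vec_def mult.commute)
  have "column i0 (transpose N) = transpose N *v axis i0 1"
    by (simp add: matrix_vector_mult_basis)
  also have "\<dots> = (transpose N ** transpose M) *v v t"
    by (simp only: Mt[symmetric] matrix_vector_mul_assoc)
  also have "\<dots> = v t"
    using MN by (simp only: matrix_transpose_mul[symmetric] transpose_mat matrix_vector_mul_lid)
  finally show "column i0 (transpose (matrix_inv (\<chi> i j. z j t $ i))) = vector_derivative x0 (at t)"
    unfolding N_def M_def v_def .
qed
end
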